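(* Let $c>0$, $0<\lambda<T_M$, and let $f\in C^2(\mathbb R)$ solve $$f''(y)-cf'(y)-f^4(y)=-\int_{-\infty}^\infty E(y-\eta)f^4(\eta)\,d\eta\ (y\in\mathbb R),\qquad 0<\lambda\le f\le T_M.$$ Then $f$ is constant.
   Context: $E(x)=\frac12\int_{|x|}^\infty\frac{e^{-t}}{t}dt$. *)

theory Defs
  imports "HOL-Analysis.Analysis"
begin

text \<open>The kernel E(x) = 1/2 * integral from |x| to infinity of exp(-t)/t dt
  (Lebesgue integral; at x = 0 the integral diverges, a null set).\<close>
definition E :: "real \<Rightarrow> real" where
  "E x = (1/2) * (LINT t:{\<bar>x\<bar><..}|lborel. exp (- t) / t)"

end

theory Submission
  imports Defs
begin
lemma lim_exp1: "((\<lambda>t::real. exp (- t)) \<longlongrightarrow> 0) at_top"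
  using tendsto_power_div_exp_0[of 0] by (simp add: exp_minus inverse_eq_divide)

lemma lim_exp2: "((\<lambda>t::real. t * exp (- t)) \<longlongrightarrow> 0) at_top"
  using tendsto_power_div_exp_0[of 1] by (simp add: exp_minus inverse_eq_divide)

lemma lim_exp3: "((\<lambda>t::real. - exp (- t)) \<longlongrightarrow> 0) at_top"
  using tendsto_minus[OF lim_exp1] by simp

lemma lim_exp4: "((\<lambda>t::real. - (t * exp (- t)) - exp (- t)) \<longlongrightarrow> 0) at_top"
  using tendsto_diff[OF tendsto_minus[OF lim_exp2] lim_exp1] by simp

lemma E_nonneg: "0 \<le> E x"
  unfolding E_def set_lebesgue_integral_def
  by (auto intro!: Bochner_Integration.integral_nonneg simp: indicator_def)

lemma E_even: "E (-x) = E x" by (simp add: E_def)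

lemma E_alt: "E x = 1/2 * (LBINT t. (if \<bar>x\<bar> < t then 1 else 0) * (exp (- t) / t))"
  unfolding E_def set_lebesgue_integral_def
  by (auto simp: indicator_def intro!: arg_cong[where f="\<lambda>x. _ * x"] Bochner_Integration.integral_cong)

lemma E_meas[measurable]: "E \<in> borel_measurable borel"
  unfolding E_alt[abs_def] by measurable

lemma nn_exp: "(\<integral>\<^sup>+t\<in>{0..}. ennreal (exp (- t)) \<partial>lborel) = 1"
proof -
  have "(\<integral>\<^sup>+t\<in>{0..}. ennreal (exp (- t)) \<partial>lborel) = ennreal (0 - (- exp (- 0)))"
    by (rule nn_integral_FTC_atLeast[where F="\<lambda>t. - exp (- t)"])
       (auto intro!: derivative_eq_intros lim_exp3)
  then show ?thesis by simp
qed

lemma nn_texp: "(\<integral>\<^sup>+t\<in>{0..}. ennreal (t * exp (- t)) \<partial>lborel) = 1"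
proof -
  have "(\<integral>\<^sup>+t\<in>{0..}. ennreal (t * exp (- t)) \<partial>lborel) = ennreal (0 - (- (0 + 1) * exp (- 0)))"
    by (rule nn_integral_FTC_atLeast[where F="\<lambda>t. - (t + 1) * exp (- t)"])
       (auto intro!: derivative_eq_intros lim_exp4 simp: algebra_simps)
  then show ?thesis by simp
qed

lemma E_nn:
  assumes "x \<noteq> 0"
  shows "ennreal (E x) = ennreal (1/2) * (\<integral>\<^sup>+t. ennreal ((if \<bar>x\<bar> < t then 1 else 0) * (exp (- t) / t)) \<partial>lborel)"
proof -
  let ?g = "\<lambda>t. (if \<bar>x\<bar> < t then 1 else 0) * (exp (- t) / t)"
  have nn: "\<And>t. 0 \<le> ?g t" by (auto intro!: divide_nonneg_pos)
  have "(\<integral>\<^sup>+t. ennreal (norm (?g t)) \<partial>lborel) \<le> (\<integral>\<^sup>+t. indicator {0..} t * ennreal (exp (- t)) * ennreal (1 / \<bar>x\<bar>) \<partial>lborel)"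
  proof (intro nn_integral_mono)
    fix t
    show "ennreal (norm (?g t)) \<le> indicator {0..} t * ennreal (exp (- t)) * ennreal (1 / \<bar>x\<bar>)"
    proof (cases "\<bar>x\<bar> < t")
      case True
      then have "exp (- t) / t \<le> exp (- t) * (1 / \<bar>x\<bar>)"
        using assms by (auto simp: field_simps intro!: mult_left_mono)
      with True show ?thesis by (auto simp: ennreal_mult[symmetric] intro!: ennreal_leI)
    qed auto
  qed
  also have "\<dots> = (\<integral>\<^sup>+t\<in>{0..}. ennreal (exp (- t)) \<partial>lborel) * ennreal (1 / \<bar>x\<bar>)"
    by (subst nn_integral_multc) (auto simp: mult_ac)
  also have "\<dots> < \<infinity>" by (simp add: nn_exp)
  finally have int: "integrable lborel ?g"
    by (intro integrableI_bounded) auto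
  have "ennreal (E x) = ennreal (1/2) * ennreal (LBINT t. ?g t)"
    unfolding E_alt by (subst ennreal_mult) (auto intro!: Bochner_Integration.integral_nonneg nn)
  also have "ennreal (LBINT t. ?g t) = (\<integral>\<^sup>+t. ennreal (?g t) \<partial>lborel)"
    by (rule nn_integral_eq_integral[symmetric]) (use int nn in auto)
  finally show ?thesis .
qed

lemma E_nn_weight:
  assumes [measurable]: "w \<in> borel_measurable borel" and w: "\<And>x. 0 \<le> w x"
  shows "(\<integral>\<^sup>+x. ennreal (E x * w x) \<partial>lborel) = ennreal (1/2) *
     (\<integral>\<^sup>+t. ennreal (exp (- t) / t) * (\<integral>\<^sup>+x. indicator {-t<..<t} x * ennreal (w x) \<partial>lborel) \<partial>lborel)"
proof -
  have "(\<integral>\<^sup>+x. ennreal (E x * w x) \<partial>lborel) = (\<integral>\<^sup>+x. ennreal (1/2) *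
     (\<integral>\<^sup>+t. ennreal ((if \<bar>x\<bar> < t then 1 else 0) * (exp (- t) / t)) * ennreal (w x) \<partial>lborel) \<partial>lborel)"
  proof (rule nn_integral_cong_AE)
    show "AE x in lborel. ennreal (E x * w x) = ennreal (1/2) *
     (\<integral>\<^sup>+t. ennreal ((if \<bar>x\<bar> < t then 1 else 0) * (exp (- t) / t)) * ennreal (w x) \<partial>lborel)"
      using AE_lborel_singleton[of 0]
    proof eventually_elim
      case (elim x)
      then show ?case
        by (simp add: ennreal_mult E_nonneg w E_nn nn_integral_multc mult.assoc)
    qed
  qed
  also have "\<dots> = ennreal (1/2) * (\<integral>\<^sup>+x. (\<integral>\<^sup>+t. ennreal ((if \<bar>x\<bar> < t then 1 else 0) * (exp (- t) / t)) * ennreal (w x) \<partial>lborel) \<partial>lborel)"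
    by (rule nn_integral_cmult) measurable
  also have "(\<integral>\<^sup>+x. (\<integral>\<^sup>+t. ennreal ((if \<bar>x\<bar> < t then 1 else 0) * (exp (- t) / t)) * ennreal (w x) \<partial>lborel) \<partial>lborel)
     = (\<integral>\<^sup>+t. (\<integral>\<^sup>+x. ennreal ((if \<bar>x\<bar> < t then 1 else 0) * (exp (- t) / t)) * ennreal (w x) \<partial>lborel) \<partial>lborel)"
    by (rule lborel_pair.Fubini'[symmetric]) measurable
  also have "\<dots> = (\<integral>\<^sup>+t. ennreal (exp (- t) / t) * (\<integral>\<^sup>+x. indicator {-t<..<t} x * ennreal (w x) \<partial>lborel) \<partial>lborel)"
  proof (rule nn_integral_cong)
    fix t :: real
    have "(\<integral>\<^sup>+x. ennreal ((if \<bar>x\<bar> < t then 1 else 0) * (exp (- t) / t)) * ennreal (w x) \<partial>lborel)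
       = (\<integral>\<^sup>+x. ennreal (exp (- t) / t) * (indicator {-t<..<t} x * ennreal (w x)) \<partial>lborel)"
      by (intro nn_integral_cong) (auto simp: indicator_def abs_less_iff)
    also have "\<dots> = ennreal (exp (- t) / t) * (\<integral>\<^sup>+x. indicator {-t<..<t} x * ennreal (w x) \<partial>lborel)"
      by (rule nn_integral_cmult) measurable
    finally show "(\<integral>\<^sup>+x. ennreal ((if \<bar>x\<bar> < t then 1 else 0) * (exp (- t) / t)) * ennreal (w x) \<partial>lborel)
       = ennreal (exp (- t) / t) * (\<integral>\<^sup>+x. indicator {-t<..<t} x * ennreal (w x) \<partial>lborel)" .
  qed
  finally show ?thesis .
qed


lemma nn_Ioo_const[simp]: "emeasure lborel {-t<..<t} = ennreal (if 0 < t then 2 * t else 0)"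
proof (cases "0 < t")
  case True
  then show ?thesis by simp
next
  case False
  then have "{-t<..<t} = {}" by auto
  then show ?thesis using False by simp
qed

lemma ennr_inv2: "inverse (2::ennreal) * 2 = 1"
proof -
  have "inverse (2::ennreal) * 2 = 2 / 2" by (simp add: divide_ennreal_def mult.commute)
  also have "\<dots> = 1" by (rule ennreal_divide_self) auto
  finally show ?thesis .
qed

lemma E_nn_int: "(\<integral>\<^sup>+x. ennreal (E x) \<partial>lborel) = 1"
proof -
  have "(\<integral>\<^sup>+x. ennreal (E x) \<partial>lborel) = (\<integral>\<^sup>+x. ennreal (E x * 1) \<partial>lborel)" by simp
  also have "\<dots> = ennreal (1/2) *
     (\<integral>\<^sup>+t. ennreal (exp (- t) / t) * ennreal (if 0 < t then 2 * t else 0) \<partial>lborel)"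
    by (subst E_nn_weight) (auto simp: nn_Ioo_const)
  also have "(\<integral>\<^sup>+t. ennreal (exp (- t) / t) * ennreal (if 0 < t then 2 * t else 0) \<partial>lborel)
      = (\<integral>\<^sup>+t\<in>{0..}. ennreal (2 * exp (- t)) \<partial>lborel)"
  proof (rule nn_integral_cong_AE)
    show "AE t in lborel. ennreal (exp (- t) / t) * ennreal (if 0 < t then 2 * t else 0) = ennreal (2 * exp (- t)) * indicator {0..} t"
      using AE_lborel_singleton[of 0]
      by eventually_elim (auto simp: ennreal_mult[symmetric] indicator_def)
  qed
  also have "\<dots> = ennreal 2 * (\<integral>\<^sup>+t\<in>{0..}. ennreal (exp (- t)) \<partial>lborel)"
    by (subst nn_integral_cmult[symmetric]) (auto simp: indicator_def ennreal_mult' mult.left_commute intro!: nn_integral_cong)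
  finally show ?thesis by (simp add: nn_exp ennr_inv2)
qed

lemma E_integrable: "integrable lborel E" and E_integral: "(LBINT x. E x) = 1"
proof -
  show int: "integrable lborel E"
    by (rule integrableI_nn_integral_finite[where x=1]) (auto simp: E_nonneg E_nn_int)
  have "ennreal (LBINT x. E x) = 1"
    using nn_integral_eq_integral[OF int] E_nn_int by (simp add: E_nonneg)
  then show "(LBINT x. E x) = 1"
    using Bochner_Integration.integral_nonneg[of lborel E] E_nonneg by simp
qed

lemma E_mom_integrable: "integrable lborel (\<lambda>x. \<bar>x\<bar> * E x)"
proof (rule integrableI_bounded)
  show "(\<lambda>x. \<bar>x\<bar> * E x) \<in> borel_measurable lborel" by measurable
  define I where "I = (\<integral>\<^sup>+t. ennreal (exp (- t) / t) * (\<integral>\<^sup>+x. indicator {-t<..<t} x * ennreal \<bar>x\<bar> \<partial>lborel) \<partial>lborel)"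
  have "I \<le> (\<integral>\<^sup>+t. ennreal (exp (- t) / t) * (ennreal t * ennreal (if 0 < t then 2 * t else 0)) \<partial>lborel)"
    unfolding I_def
  proof (intro nn_integral_mono mult_left_mono)
    fix t :: real
    have "(\<integral>\<^sup>+x. indicator {-t<..<t} x * ennreal \<bar>x\<bar> \<partial>lborel) \<le> (\<integral>\<^sup>+x. ennreal t * (indicator {-t<..<t} x) \<partial>lborel)"
      by (intro nn_integral_mono) (auto simp: indicator_def intro!: ennreal_leI)
    also have "\<dots> = ennreal t * ennreal (if 0 < t then 2 * t else 0)"
      by (subst nn_integral_cmult) auto
    finally show "(\<integral>\<^sup>+x. indicator {-t<..<t} x * ennreal \<bar>x\<bar> \<partial>lborel) \<le> ennreal t * ennreal (if 0 < t then 2 * t else 0)" .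
  qed auto
  also have "\<dots> = (\<integral>\<^sup>+t\<in>{0..}. ennreal (2 * (t * exp (- t))) \<partial>lborel)"
  proof (rule nn_integral_cong_AE)
    show "AE t in lborel. ennreal (exp (- t) / t) * (ennreal t * ennreal (if 0 < t then 2 * t else 0)) = ennreal (2 * (t * exp (- t))) * indicator {0..} t"
      using AE_lborel_singleton[of 0]
      by eventually_elim (auto simp: ennreal_mult[symmetric] indicator_def)
  qed
  also have "\<dots> = ennreal 2 * (\<integral>\<^sup>+t\<in>{0..}. ennreal (t * exp (- t)) \<partial>lborel)"
    by (subst nn_integral_cmult[symmetric]) (auto simp: indicator_def ennreal_mult' mult.left_commute intro!: nn_integral_cong)
  also have "\<dots> = 2" by (simp add: nn_texp)
  finally have I: "I < \<infinity>" by (auto simp: top.not_eq_extremum dest!: le_less_trans[where z=\<infinity>])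
  have "(\<integral>\<^sup>+x. ennreal (norm (\<bar>x\<bar> * E x)) \<partial>lborel) = (\<integral>\<^sup>+x. ennreal (E x * \<bar>x\<bar>) \<partial>lborel)"
    by (auto intro!: nn_integral_cong simp: E_nonneg abs_mult mult.commute)
  also have "\<dots> = ennreal (1/2) * I"
    unfolding I_def by (subst E_nn_weight) auto
  also have "\<dots> < \<infinity>" using I ennreal_less_top[of "1/2"] unfolding ennreal_mult_less_top infinity_ennreal_def by blast
  finally show "(\<integral>\<^sup>+x. ennreal (norm (\<bar>x\<bar> * E x)) \<partial>lborel) < \<infinity>" .
qed

lemma E_mom1_integrable: "integrable lborel (\<lambda>x. x * E x)"
  by (rule Bochner_Integration.integrable_bound[OF E_mom_integrable]) (auto simp: abs_mult E_nonneg)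

lemma E_mom1_zero: "(LBINT x. x * E x) = 0"
proof -
  have "(LBINT x. x * E x) = \<bar>-1\<bar> *\<^sub>R (LBINT x. (0 + (-1) * x) * E (0 + (-1) * x))"
    by (rule lborel_integral_real_affine) simp
  also have "\<dots> = - (LBINT x. x * E x)" by (simp add: E_even)
  finally show ?thesis by simp
qed

lemma conv_integrable:
  assumes [measurable]: "g \<in> borel_measurable borel" and B: "\<And>x. \<bar>g x\<bar> \<le> B"
  shows "integrable lborel (\<lambda>s. E s * g (y - s))"
proof (rule Bochner_Integration.integrable_bound)
  show "integrable lborel (\<lambda>s. B * E s)" by (intro integrable_mult_right E_integrable)
  show "AE s in lborel. norm (E s * g (y - s)) \<le> norm (B * E s)"
  proof (intro AE_I2)
    fix s
    have "\<bar>g (y - s)\<bar> \<le> \<bar>B\<bar>" using B[of "y - s"] by linarith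
    then show "norm (E s * g (y - s)) \<le> norm (B * E s)"
      by (simp add: abs_mult E_nonneg mult.commute mult_left_mono)
  qed
qed measurable

lemma conv_le:
  assumes [measurable]: "g \<in> borel_measurable borel" and B: "\<And>x. \<bar>g x\<bar> \<le> B" and le: "\<And>x. g x \<le> U"
  shows "(LBINT s. E s * g (y - s)) \<le> U"
proof -
  have "(LBINT s. E s * g (y - s)) \<le> (LBINT s. U * E s)"
  proof (rule integral_mono)
    show "integrable lborel (\<lambda>s. E s * g (y - s))" by (rule conv_integrable[OF assms(1) B])
    show "integrable lborel (\<lambda>s. U * E s)" by (intro integrable_mult_right E_integrable)
    fix x show "E x * g (y - x) \<le> U * E x"
      using mult_left_mono[OF le E_nonneg, of x "y - x"] by (simp add: mult.commute)
  qed
  also have "\<dots> = U" by (simp add: E_integral)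
  finally show ?thesis .
qed

lemma conv_ge:
  assumes [measurable]: "g \<in> borel_measurable borel" and B: "\<And>x. \<bar>g x\<bar> \<le> B" and le: "\<And>x. U \<le> g x"
  shows "U \<le> (LBINT s. E s * g (y - s))"
proof -
  have "U = (LBINT s. U * E s)" by (simp add: E_integral)
  also have "\<dots> \<le> (LBINT s. E s * g (y - s))"
  proof (rule integral_mono)
    show "integrable lborel (\<lambda>s. E s * g (y - s))" by (rule conv_integrable[OF assms(1) B])
    show "integrable lborel (\<lambda>s. U * E s)" by (intro integrable_mult_right E_integrable)
    fix x show "U * E x \<le> E x * g (y - x)"
      using mult_left_mono[OF le E_nonneg, of x "y - x"] by (simp add: mult.commute)
  qed
  finally show ?thesis .
qed

lemma conv_abs:
  assumes [measurable]: "g \<in> borel_measurable borel" and B: "\<And>x. \<bar>g x\<bar> \<le> B"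
  shows "\<bar>LBINT s. E s * g (y - s)\<bar> \<le> B"
proof -
  have "(LBINT s. E s * g (y - s)) \<le> B" by (rule conv_le[OF assms]) (use B in \<open>auto simp: abs_le_iff\<close>)
  moreover have "-B \<le> (LBINT s. E s * g (y - s))"
  proof (rule conv_ge[OF assms])
    fix x show "-B \<le> g x" using B[of x] unfolding abs_le_iff by linarith
  qed
  ultimately show ?thesis by linarith
qed

lemma conv_shift: "(LBINT \<eta>. E (y - \<eta>) * g \<eta>) = (LBINT s. E s * g (y - s))"
  using lborel_integral_real_affine[of "-1" "\<lambda>\<eta>. E (y - \<eta>) * g \<eta>" y] by simp

lemma conv_fubini:
  assumes gm[measurable]: "g \<in> borel_measurable borel" and B: "\<And>x. \<bar>g x\<bar> \<le> B"
  shows "set_integrable lborel {a..b} (\<lambda>y. LBINT s. E s * g (y - s))"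
    and "(LINT y:{a..b}|lborel. LBINT s. E s * g (y - s)) = (LBINT s. E s * (LINT y:{a..b}|lborel. g (y - s)))"
proof -
  define F where "F = (\<lambda>y s. indicator {a..b} y * (E s * g (y - s)))"
  have Fm[measurable]: "case_prod F \<in> borel_measurable (lborel \<Otimes>\<^sub>M lborel)"
    unfolding F_def by measurable
  have absm[measurable]: "(\<lambda>x. \<bar>g x\<bar>) \<in> borel_measurable borel" by measurable
  have B': "\<And>x. \<bar>\<bar>g x\<bar>\<bar> \<le> B" using B by simp
  have int: "integrable (lborel \<Otimes>\<^sub>M lborel) (case_prod F)"
  proof (rule lborel_pair.Fubini_integrable)
    show "case_prod F \<in> borel_measurable (lborel \<Otimes>\<^sub>M lborel)" by (rule Fm)
    show "AE x in lborel. integrable lborel (\<lambda>y. case_prod F (x, y))"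
      unfolding F_def by (auto intro!: integrable_mult_right conv_integrable[OF gm B])
    show "integrable lborel (\<lambda>x. LBINT y. norm (case_prod F (x, y)))"
    proof (rule Bochner_Integration.integrable_bound)
      show "integrable lborel (\<lambda>y. indicator {a..b} y * B)"
        using borel_integrable_compact[of "{a..b}" "\<lambda>_. B"] by (simp add: mult.commute)
      show "(\<lambda>x. LBINT y. norm (case_prod F (x, y))) \<in> borel_measurable lborel"
        using Fm by measurable
      show "AE x in lborel. norm (LBINT y. norm (case_prod F (x, y))) \<le> norm (indicator {a..b} x * B)"
      proof (intro AE_I2)
        fix x
        have "(LBINT y. norm (case_prod F (x, y))) = indicator {a..b} x * (LBINT s. E s * \<bar>g (x - s)\<bar>)"
          unfolding F_def by (simp add: abs_mult E_nonneg indicator_def)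
        moreover have "0 \<le> (LBINT s. E s * \<bar>g (x - s)\<bar>)"
          by (intro Bochner_Integration.integral_nonneg) (auto simp: E_nonneg)
        moreover have "(LBINT s. E s * \<bar>g (x - s)\<bar>) \<le> B"
          using conv_abs[OF absm B', of x] by simp
        ultimately show "norm (LBINT y. norm (case_prod F (x, y))) \<le> norm (indicator {a..b} x * B)"
          using B[of 0] by (auto simp: indicator_def)
      qed
    qed
  qed
  have eq1: "(\<lambda>y. LBINT s. F y s) = (\<lambda>y. indicator {a..b} y *\<^sub>R (LBINT s. E s * g (y - s)))"
    unfolding F_def by (auto simp: fun_eq_iff indicator_def)
  have eq2: "(\<lambda>s. LBINT y. F y s) = (\<lambda>s. E s * (LINT y:{a..b}|lborel. g (y - s)))"
    unfolding F_def set_lebesgue_integral_def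
    by (auto simp: fun_eq_iff mult_ac)
  show "set_integrable lborel {a..b} (\<lambda>y. LBINT s. E s * g (y - s))"
    unfolding set_integrable_def
    using lborel_pair.integrable_fst'[OF int] eq1 by (simp add: case_prod_beta)
  show "(LINT y:{a..b}|lborel. LBINT s. E s * g (y - s)) = (LBINT s. E s * (LINT y:{a..b}|lborel. g (y - s)))"
    using lborel_pair.Fubini_integral[OF int] eq1 eq2 unfolding set_lebesgue_integral_def by simp
qed

lemma antideriv:
  fixes g :: "real \<Rightarrow> real"
  assumes "continuous_on UNIV g"
  shows "\<exists>G. \<forall>x. (G has_real_derivative g x) (at x)"
proof (intro exI allI)
  fix x :: real
  let ?a = "- \<bar>x\<bar> - 1" and ?b = "\<bar>x\<bar> + 1"
  have "((\<lambda>u. interval_lebesgue_integral lborel (ereal 0) (ereal u) g) has_vector_derivative g x) (at x within {?a..?b})"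
    by (rule interval_integral_FTC2) (auto intro: continuous_on_subset[OF assms])
  then have "((\<lambda>u. interval_lebesgue_integral lborel (ereal 0) (ereal u) g) has_vector_derivative g x) (at x within {?a<..<?b})"
    by (rule has_vector_derivative_within_subset) auto
  then have "((\<lambda>u. interval_lebesgue_integral lborel (ereal 0) (ereal u) g) has_vector_derivative g x) (at x)"
    by (subst (asm) has_vector_derivative_within_open) auto
  then show "((\<lambda>u. interval_lebesgue_integral lborel (ereal 0) (ereal u) g) has_real_derivative g x) (at x)"
    by (simp add: has_real_derivative_iff_has_vector_derivative)
qed

lemma ftc_Icc:
  fixes g G :: "real \<Rightarrow> real"
  assumes "a \<le> b" and G: "\<And>x. (G has_real_derivative g x) (at x)" and gc: "continuous_on UNIV g"
  shows "(LINT y:{a..b}|lborel. g y) = G b - G a"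
proof -
  have "(LBINT y=a..b. g y) = G b - G a"
    using assms
    by (intro interval_integral_FTC_finite)
       (auto intro: continuous_on_subset[OF gc] has_field_derivative_at_within
             simp: has_real_derivative_iff_has_vector_derivative[symmetric])
  then show ?thesis using interval_integral_Icc[OF \<open>a \<le> b\<close>, of g] by simp
qed

lemma mvt_gen:
  fixes F F' :: "real \<Rightarrow> real"
  assumes "\<And>x. (F has_real_derivative F' x) (at x)"
  shows "\<exists>\<xi>. \<bar>\<xi> - x\<bar> \<le> \<bar>x - x'\<bar> \<and> F x - F x' = (x - x') * F' \<xi>"
proof (cases x x' rule: linorder_cases)
  case less
  then obtain z where "x < z" "z < x'" "F x' - F x = (x' - x) * F' z"
    using MVT2[of x x' F F'] assms by blast
  then show ?thesis by (intro exI[of _ z]) (auto simp: algebra_simps)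
next
  case equal then show ?thesis by auto
next
  case greater
  then obtain z where "x' < z" "z < x" "F x - F x' = (x - x') * F' z"
    using MVT2[of x' x F F'] assms by blast
  then show ?thesis by (intro exI[of _ z]) (auto simp: algebra_simps)
qed

lemma lip:
  fixes G g :: "real \<Rightarrow> real"
  assumes "\<And>x. (G has_real_derivative g x) (at x)" and "\<And>x. \<bar>g x\<bar> \<le> B"
  shows "\<bar>G x - G x'\<bar> \<le> B * \<bar>x - x'\<bar>"
proof -
  obtain \<xi> where "G x - G x' = (x - x') * g \<xi>" using mvt_gen[OF assms(1), of x x'] by blast
  then show ?thesis using assms(2)[of \<xi>] by (simp add: abs_mult mult.commute mult_right_mono)
qed

lemma deriv_cont:
  fixes G g :: "real \<Rightarrow> real"
  assumes "\<And>x. (G has_real_derivative g x) (at x)"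
  shows "continuous_on UNIV G"
  using assms by (intro continuous_at_imp_continuous_on) (auto intro: DERIV_isCont)

lemma decay_tendsto:
  fixes \<phi> :: "real \<Rightarrow> real"
  assumes "\<And>\<epsilon>. \<epsilon> > 0 \<Longrightarrow> \<exists>N. \<forall>x. N \<le> \<bar>x\<bar> \<longrightarrow> \<bar>\<phi> x\<bar> \<le> \<epsilon>"
  shows "(\<phi> \<longlongrightarrow> 0) at_top" and "((\<lambda>R. \<phi> (-R)) \<longlongrightarrow> 0) at_top"
proof -
  show "(\<phi> \<longlongrightarrow> 0) at_top"
  proof (rule tendstoI)
    fix e :: real assume "e > 0"
    then obtain N where N: "\<forall>x. N \<le> \<bar>x\<bar> \<longrightarrow> \<bar>\<phi> x\<bar> \<le> e/2" using assms[of "e/2"] by auto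
    show "\<forall>\<^sub>F x in at_top. dist (\<phi> x) 0 < e"
      unfolding eventually_at_top_linorder
    proof (intro exI[of _ "\<bar>N\<bar>"] allI impI)
      fix n :: real assume "\<bar>N\<bar> \<le> n"
      then have "N \<le> \<bar>n\<bar>" "N \<le> \<bar>-n\<bar>" by auto
      then show "dist (\<phi> n) 0 < e" using N \<open>e > 0\<close> by (force simp: dist_real_def)
    qed
  qed
  show "((\<lambda>R. \<phi> (-R)) \<longlongrightarrow> 0) at_top"
  proof (rule tendstoI)
    fix e :: real assume "e > 0"
    then obtain N where N: "\<forall>x. N \<le> \<bar>x\<bar> \<longrightarrow> \<bar>\<phi> x\<bar> \<le> e/2" using assms[of "e/2"] by auto
    show "\<forall>\<^sub>F x in at_top. dist (\<phi> (-x)) 0 < e"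
      unfolding eventually_at_top_linorder
    proof (intro exI[of _ "\<bar>N\<bar>"] allI impI)
      fix n :: real assume "\<bar>N\<bar> \<le> n"
      then have "N \<le> \<bar>n\<bar>" "N \<le> \<bar>-n\<bar>" by auto
      then have "\<bar>\<phi> (-n)\<bar> \<le> e/2" using N by blast
      then show "dist (\<phi> (-n)) 0 < e" using \<open>e > 0\<close> by (simp add: dist_real_def)
    qed
  qed
qed

context
  fixes g G :: "real \<Rightarrow> real" and B :: real
  assumes gc: "continuous_on UNIV g" and gB: "\<And>x. \<bar>g x\<bar> \<le> B"
    and G: "\<And>x. (G has_real_derivative g x) (at x)"
begin

lemma gm[measurable]: "g \<in> borel_measurable borel"
  by (rule borel_measurable_continuous_onI[OF gc])

lemma Gm[measurable]: "G \<in> borel_measurable borel"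
  by (rule borel_measurable_continuous_onI[OF deriv_cont[OF G]])

lemma B_nonneg: "0 \<le> B" using gB[of 0] by linarith

lemma W_bound: "\<bar>(G R - G (-R)) - (G (R - s) - G (-R - s))\<bar> \<le> 2 * B * \<bar>s\<bar>"
  using lip[OF G gB, of R "R - s"] lip[OF G gB, of "-R" "-R - s"] by auto

lemma W_integrable: "integrable lborel (\<lambda>s. E s * ((G R - G (-R)) - (G (R - s) - G (-R - s))))"
proof (rule Bochner_Integration.integrable_bound)
  show "integrable lborel (\<lambda>s. (2 * B) * (\<bar>s\<bar> * E s))"
    by (intro integrable_mult_right E_mom_integrable)
  show "AE s in lborel. norm (E s * ((G R - G (-R)) - (G (R - s) - G (-R - s)))) \<le> norm ((2 * B) * (\<bar>s\<bar> * E s))"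
  proof (intro AE_I2)
    fix s
    have "E s * \<bar>(G R - G (-R)) - (G (R - s) - G (-R - s))\<bar> \<le> E s * (2 * B * \<bar>s\<bar>)"
      by (intro mult_left_mono W_bound E_nonneg)
    then show "norm (E s * ((G R - G (-R)) - (G (R - s) - G (-R - s)))) \<le> norm ((2 * B) * (\<bar>s\<bar> * E s))"
      using B_nonneg by (simp add: abs_mult E_nonneg mult_ac)
  qed
qed measurable

lemma S_repr:
  assumes "0 \<le> R"
  shows "(LINT y:{-R..R}|lborel. g y) - (LINT y:{-R..R}|lborel. LBINT s. E s * g (y - s))
       = (LBINT s. E s * ((G R - G (-R)) - (G (R - s) - G (-R - s))))"
proof -
  have inner: "(LINT y:{-R..R}|lborel. g (y - s)) = G (R - s) - G (-R - s)" for s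
  proof (rule ftc_Icc)
    show "-R \<le> R" using assms by simp
    fix y
    have "((\<lambda>y. G (y + (-s))) has_real_derivative g (y + (-s))) (at y)"
      using DERIV_shift G by blast
    then show "((\<lambda>y. G (y - s)) has_real_derivative g (y - s)) (at y)" by simp
  next
    show "continuous_on UNIV (\<lambda>y. g (y - s))"
      by (rule continuous_on_compose2[OF gc]) (auto intro!: continuous_intros)
  qed
  have c1: "(LINT y:{-R..R}|lborel. LBINT s. E s * g (y - s)) = (LBINT s. E s * (G (R - s) - G (-R - s)))"
    using conv_fubini(2)[OF gm gB, of "-R" R] inner by simp
  have c2: "(LINT y:{-R..R}|lborel. g y) = (LBINT s. E s * (G R - G (-R)))"
    using ftc_Icc[of "-R" R G g, OF _ G gc] assms by (simp add: E_integral)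
  have int2: "integrable lborel (\<lambda>s. E s * (G (R - s) - G (-R - s)))"
  proof -
    have "integrable lborel (\<lambda>s. E s * (G R - G (-R)) - E s * ((G R - G (-R)) - (G (R - s) - G (-R - s))))"
      by (intro Bochner_Integration.integrable_diff integrable_mult_left E_integrable W_integrable)
    moreover have "(\<lambda>s. E s * (G R - G (-R)) - E s * ((G R - G (-R)) - (G (R - s) - G (-R - s))))
       = (\<lambda>s. E s * (G (R - s) - G (-R - s)))" by (auto simp: fun_eq_iff algebra_simps)
    ultimately show ?thesis by simp
  qed
  have "(LBINT s. E s * (G R - G (-R)) - E s * (G (R - s) - G (-R - s))) = (LBINT s. E s * (G R - G (-R))) - (LBINT s. E s * (G (R - s) - G (-R - s)))"
    by (rule Bochner_Integration.integral_diff[OF integrable_mult_left[OF E_integrable] int2])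
  then show ?thesis
    unfolding c1 c2 by (simp only: right_diff_distrib[symmetric])
qed

lemma S_bound:
  "\<bar>LBINT s. E s * ((G R - G (-R)) - (G (R - s) - G (-R - s)))\<bar> \<le> 2 * B * (LBINT s. \<bar>s\<bar> * E s)"
proof -
  have "(LBINT s. E s * ((G R - G (-R)) - (G (R - s) - G (-R - s)))) \<le> (LBINT s. (2 * B) * (\<bar>s\<bar> * E s))"
  proof (intro integral_mono W_integrable integrable_mult_right E_mom_integrable)
    fix s
    have "E s * ((G R - G (-R)) - (G (R - s) - G (-R - s))) \<le> E s * (2 * B * \<bar>s\<bar>)"
      using W_bound[of R s] by (intro mult_left_mono E_nonneg) auto
    then show "E s * ((G R - G (-R)) - (G (R - s) - G (-R - s))) \<le> (2 * B) * (\<bar>s\<bar> * E s)"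
      by (simp add: mult_ac)
  qed
  moreover have "(LBINT s. - ((2 * B) * (\<bar>s\<bar> * E s))) \<le> (LBINT s. E s * ((G R - G (-R)) - (G (R - s) - G (-R - s))))"
  proof (intro integral_mono W_integrable integrable_minus integrable_mult_right E_mom_integrable)
    fix s
    have "E s * (- (2 * B * \<bar>s\<bar>)) \<le> E s * ((G R - G (-R)) - (G (R - s) - G (-R - s)))"
      using W_bound[of R s] by (intro mult_left_mono E_nonneg) auto
    then show "- ((2 * B) * (\<bar>s\<bar> * E s)) \<le> E s * ((G R - G (-R)) - (G (R - s) - G (-R - s)))"
      by (simp add: mult_ac)
  qed
  ultimately show ?thesis by (simp add: abs_le_iff)
qed


lemma S_limit:
  fixes g' :: "real \<Rightarrow> real"
  assumes g': "\<And>x. (g has_real_derivative g' x) (at x)"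
    and dec: "\<And>\<epsilon>. \<epsilon> > 0 \<Longrightarrow> \<exists>N. \<forall>x. N \<le> \<bar>x\<bar> \<longrightarrow> \<bar>g' x\<bar> \<le> \<epsilon>"
  shows "((\<lambda>R. LBINT s. E s * ((G R - G (-R)) - (G (R - s) - G (-R - s)))) \<longlongrightarrow> 0) at_top"
proof -
  define \<rho> where "\<rho> x s = G x - G (x - s) - s * g x" for x s
  have rho_bound: "\<exists>\<zeta>. \<bar>\<zeta> - x\<bar> \<le> \<bar>s\<bar> \<and> \<bar>\<rho> x s\<bar> \<le> s\<^sup>2 * \<bar>g' \<zeta>\<bar>" for x s
  proof -
    obtain \<xi> where \<xi>: "\<bar>\<xi> - x\<bar> \<le> \<bar>x - (x - s)\<bar>" "G x - G (x - s) = (x - (x - s)) * g \<xi>"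
      using mvt_gen[OF G, of x "x - s"] by blast
    obtain \<zeta> where \<zeta>: "\<bar>\<zeta> - x\<bar> \<le> \<bar>x - \<xi>\<bar>" "g x - g \<xi> = (x - \<xi>) * g' \<zeta>"
      using mvt_gen[OF g', of x \<xi>] by blast
    have e1: "g \<xi> = g x - (x - \<xi>) * g' \<zeta>" using \<zeta>(2) by linarith
    have e2: "G x - G (x - s) = s * g \<xi>" using \<xi>(2) by simp
    have "\<rho> x s = s * (\<xi> - x) * g' \<zeta>"
      unfolding \<rho>_def e2 e1 by (simp add: algebra_simps)
    then have "\<bar>\<rho> x s\<bar> = \<bar>s\<bar> * \<bar>\<xi> - x\<bar> * \<bar>g' \<zeta>\<bar>" by (simp add: abs_mult)
    also have "\<dots> \<le> \<bar>s\<bar> * \<bar>s\<bar> * \<bar>g' \<zeta>\<bar>"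
      using \<xi>(1) by (intro mult_right_mono mult_left_mono) auto
    finally show ?thesis using \<zeta>(1) \<xi>(1)
      by (intro exI[of _ \<zeta>]) (auto simp: power2_eq_square abs_mult[symmetric])
  qed
  have rho_dec: "\<exists>N. \<forall>x. N \<le> \<bar>x\<bar> \<longrightarrow> \<bar>\<rho> x s\<bar> \<le> \<epsilon>" if eps: "\<epsilon> > 0" for s \<epsilon>
  proof -
    obtain N0 where N0: "\<forall>x. N0 \<le> \<bar>x\<bar> \<longrightarrow> \<bar>g' x\<bar> \<le> \<epsilon> / (s\<^sup>2 + 1)"
    proof -
      have "0 < \<epsilon> / (s\<^sup>2 + 1)" using eps by (intro divide_pos_pos) (auto simp: add_nonneg_pos)
      then show ?thesis using dec that by blast
    qed
    show ?thesis
    proof (intro exI[of _ "N0 + \<bar>s\<bar>"] allI impI)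
      fix x assume x: "N0 + \<bar>s\<bar> \<le> \<bar>x\<bar>"
      obtain \<zeta> where z: "\<bar>\<zeta> - x\<bar> \<le> \<bar>s\<bar>" "\<bar>\<rho> x s\<bar> \<le> s\<^sup>2 * \<bar>g' \<zeta>\<bar>"
        using rho_bound by blast
      have "N0 \<le> \<bar>\<zeta>\<bar>" using x z(1) by linarith
      then have "\<bar>g' \<zeta>\<bar> \<le> \<epsilon> / (s\<^sup>2 + 1)" using N0 by blast
      then have "s\<^sup>2 * \<bar>g' \<zeta>\<bar> \<le> s\<^sup>2 * (\<epsilon> / (s\<^sup>2 + 1))" by (intro mult_left_mono) auto
      also have "\<dots> = (s\<^sup>2 / (s\<^sup>2 + 1)) * \<epsilon>" by simp
      also have "\<dots> \<le> 1 * \<epsilon>" using eps by (intro mult_right_mono) (auto simp: divide_le_eq_1 add_nonneg_pos)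
      also have "\<dots> = \<epsilon>" by simp
      finally show "\<bar>\<rho> x s\<bar> \<le> \<epsilon>" using z(2) by linarith
    qed
  qed
  have rho_small: "\<bar>\<rho> x s\<bar> \<le> 2 * B * \<bar>s\<bar>" for x s
  proof -
    have gs: "\<bar>g x\<bar> * \<bar>s\<bar> \<le> B * \<bar>s\<bar>" by (rule mult_right_mono[OF gB]) simp
    have "\<bar>G x - G (x - s)\<bar> \<le> B * \<bar>s\<bar>" using lip[OF G gB, of x "x - s"] by simp
    moreover have "\<bar>s * g x\<bar> \<le> B * \<bar>s\<bar>" using gs by (simp add: abs_mult mult.commute)
    ultimately show ?thesis unfolding \<rho>_def by linarith
  qed
  have lm1: "(\<lambda>s. 0::real) \<in> borel_measurable lborel" by simp
  have lm2: "\<And>R. (\<lambda>s. E s * (\<rho> R s - \<rho> (-R) s)) \<in> borel_measurable lborel"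
    unfolding \<rho>_def by measurable
  have lm3: "integrable lborel (\<lambda>s. (4 * B) * (\<bar>s\<bar> * E s))"
    by (intro integrable_mult_right E_mom_integrable)
  have lm4: "AE s in lborel. ((\<lambda>R. E s * (\<rho> R s - \<rho> (-R) s)) \<longlongrightarrow> 0) at_top"
  proof (intro AE_I2)
    fix s
    have "((\<lambda>R. \<rho> R s) \<longlongrightarrow> 0) at_top" "((\<lambda>R. \<rho> (-R) s) \<longlongrightarrow> 0) at_top"
      using decay_tendsto[of "\<lambda>x. \<rho> x s", OF rho_dec] by auto
    then have "((\<lambda>R. \<rho> R s - \<rho> (-R) s) \<longlongrightarrow> 0 - 0) at_top" by (rule tendsto_diff)
    then show "((\<lambda>R. E s * (\<rho> R s - \<rho> (-R) s)) \<longlongrightarrow> 0) at_top"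
      by (intro tendsto_mult_right_zero) simp
  qed
  have lm5: "\<forall>\<^sub>F R in at_top. AE s in lborel. norm (E s * (\<rho> R s - \<rho> (-R) s)) \<le> (4 * B) * (\<bar>s\<bar> * E s)"
  proof (intro always_eventually allI AE_I2)
    fix R s
    have "\<bar>\<rho> R s - \<rho> (-R) s\<bar> \<le> 4 * B * \<bar>s\<bar>" using rho_small[of R s] rho_small[of "-R" s] by linarith
    then have "E s * \<bar>\<rho> R s - \<rho> (-R) s\<bar> \<le> E s * (4 * B * \<bar>s\<bar>)" by (intro mult_left_mono E_nonneg)
    then show "norm (E s * (\<rho> R s - \<rho> (-R) s)) \<le> (4 * B) * (\<bar>s\<bar> * E s)"
      by (simp add: abs_mult E_nonneg mult_ac)
  qed
  have lim: "((\<lambda>R. LBINT s. E s * (\<rho> R s - \<rho> (-R) s)) \<longlongrightarrow> (LBINT s::real. (0::real))) at_top"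
    by (rule integral_dominated_convergence_at_top[where M=lborel and f="\<lambda>s. 0"
          and s="\<lambda>R s. E s * (\<rho> R s - \<rho> (-R) s)" and w="\<lambda>s. (4 * B) * (\<bar>s\<bar> * E s)",
          OF lm1 lm2 lm3 lm4 lm5])
  have eq: "(LBINT s. E s * ((G R - G (-R)) - (G (R - s) - G (-R - s)))) = (LBINT s. E s * (\<rho> R s - \<rho> (-R) s))" for R
  proof -
    have int_rem: "integrable lborel (\<lambda>s. E s * (\<rho> R s - \<rho> (-R) s))"
    proof (rule Bochner_Integration.integrable_bound)
      show "integrable lborel (\<lambda>s. (4 * B) * (\<bar>s\<bar> * E s))"
        by (intro integrable_mult_right E_mom_integrable)
      show "AE s in lborel. norm (E s * (\<rho> R s - \<rho> (-R) s)) \<le> norm ((4 * B) * (\<bar>s\<bar> * E s))"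
      proof (intro AE_I2)
        fix s
        have "\<bar>\<rho> R s - \<rho> (-R) s\<bar> \<le> 4 * B * \<bar>s\<bar>" using rho_small[of R s] rho_small[of "-R" s] by linarith
        then have "E s * \<bar>\<rho> R s - \<rho> (-R) s\<bar> \<le> E s * (4 * B * \<bar>s\<bar>)" by (intro mult_left_mono E_nonneg)
        then show "norm (E s * (\<rho> R s - \<rho> (-R) s)) \<le> norm ((4 * B) * (\<bar>s\<bar> * E s))"
          using B_nonneg by (simp add: abs_mult E_nonneg mult_ac)
      qed
    qed (unfold \<rho>_def, measurable)
    have "(\<lambda>s. E s * ((G R - G (-R)) - (G (R - s) - G (-R - s)))) = (\<lambda>s. (s * E s) * (g R - g (-R)) + E s * (\<rho> R s - \<rho> (-R) s))"
      by (auto simp: fun_eq_iff \<rho>_def algebra_simps)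
    then have "(LBINT s. E s * ((G R - G (-R)) - (G (R - s) - G (-R - s)))) = (LBINT s. (s * E s) * (g R - g (-R))) + (LBINT s. E s * (\<rho> R s - \<rho> (-R) s))"
      by (simp add: Bochner_Integration.integral_add[OF integrable_mult_left[OF E_mom1_integrable] int_rem])
    also have "(LBINT s. (s * E s) * (g R - g (-R))) = 0" by (simp add: E_mom1_zero)
    finally show ?thesis by simp
  qed
  show ?thesis unfolding eq using lim by simp
qed

end

lemma ode_upper:
  fixes f f1 f2 :: "real \<Rightarrow> real"
  assumes df: "\<And>y. (f has_real_derivative f1 y) (at y)"
    and df1: "\<And>y. (f1 has_real_derivative f2 y) (at y)"
    and c: "c > 0" and Bd: "\<And>y. \<bar>f2 y - c * f1 y\<bar> \<le> B"
    and fb: "\<And>y. L \<le> f y \<and> f y \<le> U"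
  shows "f1 y0 \<le> B / c"
proof (rule ccontr)
  assume "\<not> f1 y0 \<le> B / c"
  define a where "a = f1 y0 - B / c"
  have a: "a > 0" using \<open>\<not> f1 y0 \<le> B / c\<close> by (simp add: a_def)
  have B0: "0 \<le> B" using Bd[of 0] by linarith
  define \<phi> where "\<phi> y = exp (- c * y) * (f1 y - B / c)" for y
  have d\<phi>: "(\<phi> has_real_derivative exp (- c * y) * (f2 y - c * f1 y + B)) (at y)" for y
  proof -
    have "(\<phi> has_real_derivative (exp (- c * y) * (- c)) * (f1 y - B / c) + exp (- c * y) * f2 y) (at y)"
      unfolding \<phi>_def by (auto intro!: derivative_eq_intros df1)
    moreover have "(exp (- c * y) * (- c)) * (f1 y - B / c) + exp (- c * y) * f2 y = exp (- c * y) * (f2 y - c * f1 y + B)"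
      using c by (simp add: field_simps)
    ultimately show ?thesis by simp
  qed
  have mono: "\<phi> y0 \<le> \<phi> (y0 + t)" if "0 \<le> t" for t
  proof -
    obtain \<xi> where "\<phi> (y0 + t) - \<phi> y0 = ((y0 + t) - y0) * (exp (- c * \<xi>) * (f2 \<xi> - c * f1 \<xi> + B))"
      using mvt_gen[OF d\<phi>, of "y0 + t" y0] by blast
    moreover have "0 \<le> f2 \<xi> - c * f1 \<xi> + B" using Bd[of \<xi>] by linarith
    moreover have "0 \<le> ((y0 + t) - y0) * (exp (- c * \<xi>) * (f2 \<xi> - c * f1 \<xi> + B))"
      using that calculation(2) by (intro mult_nonneg_nonneg) auto
    ultimately show ?thesis by linarith
  qed
  have f1ge: "a \<le> f1 (y0 + t)" if "0 \<le> t" for t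
  proof (rule ccontr)
    assume "\<not> a \<le> f1 (y0 + t)"
    moreover have "0 \<le> B / c" using B0 c by simp
    ultimately have "f1 (y0 + t) - B / c < a" by linarith
    then have "\<phi> (y0 + t) < exp (- c * (y0 + t)) * a"
      unfolding \<phi>_def by simp
    also have "\<dots> \<le> exp (- c * y0) * a"
      using a c that by (intro mult_right_mono) (auto simp: mult_left_mono)
    also have "\<dots> = \<phi> y0" by (simp add: \<phi>_def a_def)
    finally show False using mono[OF that] by simp
  qed
  define t where "t = (U - L + 1) / a"
  have t0: "0 \<le> t" using fb[of 0] a by (auto simp: t_def)
  obtain \<xi> where \<xi>: "\<bar>\<xi> - (y0 + t)\<bar> \<le> \<bar>(y0 + t) - y0\<bar>" "f (y0 + t) - f y0 = ((y0 + t) - y0) * f1 \<xi>"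
    using mvt_gen[OF df, of "y0 + t" y0] by blast
  have "y0 \<le> \<xi>" using \<xi>(1) t0 by auto
  then have "a \<le> f1 \<xi>" using f1ge[of "\<xi> - y0"] by simp
  then have "t * a \<le> t * f1 \<xi>" using t0 by (rule mult_left_mono)
  moreover have "t * a = U - L + 1" using a by (simp add: t_def)
  ultimately have "f (y0 + t) \<ge> f y0 + (U - L + 1)" using \<xi>(2) by simp
  then show False using fb[of y0] fb[of "y0 + t"] by linarith
qed

lemma ode_bound:
  fixes f f1 f2 :: "real \<Rightarrow> real"
  assumes df: "\<And>y. (f has_real_derivative f1 y) (at y)"
    and df1: "\<And>y. (f1 has_real_derivative f2 y) (at y)"
    and c: "c > 0" and Bd: "\<And>y. \<bar>f2 y - c * f1 y\<bar> \<le> B"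
    and fb: "\<And>y. L \<le> f y \<and> f y \<le> U"
  shows "\<bar>f1 y0\<bar> \<le> B / c"
proof -
  have "f1 y0 \<le> B / c" by (rule ode_upper[OF df df1 c Bd fb])
  moreover have "- f1 y0 \<le> B / c"
  proof (rule ode_upper[of "\<lambda>y. - f y" "\<lambda>y. - f1 y" "\<lambda>y. - f2 y" c B "-U" "-L", OF _ _ c])
    show "((\<lambda>y. - f y) has_real_derivative - f1 y) (at y)" for y using df[of y] by (rule DERIV_minus)
    show "((\<lambda>y. - f1 y) has_real_derivative - f2 y) (at y)" for y using df1[of y] by (rule DERIV_minus)
    show "\<bar>- f2 y - c * - f1 y\<bar> \<le> B" for y using Bd[of y] by simp
    show "- U \<le> - f y \<and> - f y \<le> - L" for y using fb[of y] by simp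
  qed
  ultimately show ?thesis by simp
qed

lemma conv_quad:
  assumes gm[measurable]: "g \<in> borel_measurable borel" and B: "\<And>x. \<bar>g x\<bar> \<le> B"
  shows "a * (LBINT s. E s * g (y - s)) \<le> (a\<^sup>2 + (LBINT s. E s * (g (y - s))\<^sup>2)) / 2"
proof -
  have g2m[measurable]: "(\<lambda>x. (g x)\<^sup>2) \<in> borel_measurable borel" by measurable
  have B2: "\<bar>(g x)\<^sup>2\<bar> \<le> B\<^sup>2" for x
  proof -
    have "\<bar>g x\<bar>\<^sup>2 \<le> B\<^sup>2" by (rule power_mono[OF B abs_ge_zero])
    then show ?thesis by simp
  qed
  have i1: "integrable lborel (\<lambda>s. E s * g (y - s))" by (rule conv_integrable[OF gm B])
  have i2: "integrable lborel (\<lambda>s. E s * (g (y - s))\<^sup>2)" by (rule conv_integrable[OF g2m B2])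
  have "a * (LBINT s. E s * g (y - s)) = (LBINT s. a * (E s * g (y - s)))" by simp
  also have "\<dots> \<le> (LBINT s. (a\<^sup>2 / 2) * E s + (1/2) * (E s * (g (y - s))\<^sup>2))"
  proof (intro integral_mono)
    show "integrable lborel (\<lambda>s. a * (E s * g (y - s)))" by (rule integrable_mult_right[OF i1])
    show "integrable lborel (\<lambda>s. (a\<^sup>2 / 2) * E s + (1/2) * (E s * (g (y - s))\<^sup>2))"
      by (intro Bochner_Integration.integrable_add integrable_mult_right E_integrable i2)
    fix s
    have "(a\<^sup>2 + (g (y - s))\<^sup>2) / 2 - a * g (y - s) = (a - g (y - s))\<^sup>2 / 2"
      by (simp add: power2_diff field_simps)
    moreover have "0 \<le> (a - g (y - s))\<^sup>2 / 2" by simp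
    ultimately have "a * g (y - s) \<le> (a\<^sup>2 + (g (y - s))\<^sup>2) / 2" by linarith
    then have "E s * (a * g (y - s)) \<le> E s * ((a\<^sup>2 + (g (y - s))\<^sup>2) / 2)"
      by (intro mult_left_mono E_nonneg)
    then show "a * (E s * g (y - s)) \<le> (a\<^sup>2 / 2) * E s + (1/2) * (E s * (g (y - s))\<^sup>2)"
      by (simp add: field_simps)
  qed
  also have "\<dots> = (LBINT s. (a\<^sup>2 / 2) * E s) + (LBINT s. (1/2) * (E s * (g (y - s))\<^sup>2))"
    by (intro Bochner_Integration.integral_add integrable_mult_right E_integrable i2)
  also have "\<dots> = (a\<^sup>2 / 2) * (LBINT s. E s) + (1/2) * (LBINT s. E s * (g (y - s))\<^sup>2)"
    by simp
  also have "\<dots> = (a\<^sup>2 + (LBINT s. E s * (g (y - s))\<^sup>2)) / 2"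
    by (simp add: E_integral)
  finally show ?thesis .
qed

lemma pow5_bound:
  fixes a b T :: real
  assumes "0 \<le> a" "a \<le> T" "0 \<le> b" "b \<le> T"
  shows "\<bar>a ^ 5 - b ^ 5\<bar> \<le> 5 * T ^ 4 * \<bar>a - b\<bar>"
proof -
  have eq: "a ^ 5 - b ^ 5 = (a - b) * (a^4 + a^3*b + a^2*b^2 + a*b^3 + b^4)"
    by (simp add: algebra_simps eval_nat_numeral)
  have m: "a ^ i * b ^ j \<le> T ^ i * T ^ j" for i j
    by (intro mult_mono power_mono) (use assms in auto)
  have e: "T^3 * T^1 = T^4" "T^2 * T^2 = T^4" "T^1 * T^3 = T^4" "T^4 * T^0 = T^4" "T^0 * T^4 = T^4"
    by (simp_all add: eval_nat_numeral)
  have "a^4 * b^0 \<le> T^4" "a^3 * b^1 \<le> T^4" "a^2 * b^2 \<le> T^4" "a^1 * b^3 \<le> T^4" "a^0 * b^4 \<le> T^4"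
    using m[of 4 0] m[of 3 1] m[of 2 2] m[of 1 3] m[of 0 4] unfolding e by auto
  then have le: "a^4 + a^3*b + a^2*b^2 + a*b^3 + b^4 \<le> 5 * T^4" by simp
  have "0 \<le> a^4 + a^3*b + a^2*b^2 + a*b^3 + b^4" using assms by simp
  then have "\<bar>a^4 + a^3*b + a^2*b^2 + a*b^3 + b^4\<bar> \<le> 5 * T^4" using le by simp
  then show ?thesis unfolding eq abs_mult
    by (simp add: mult.commute mult_left_mono)
qed

theorem theorem3p6:
  fixes f :: "real \<Rightarrow> real" and c lam T_M :: real
  assumes "c > 0" and "0 < lam" and "lam < T_M"
    and "\<forall>y. f differentiable (at y)"
    and "\<forall>y. deriv f differentiable (at y)"
    and "continuous_on UNIV (deriv (deriv f))"
    and "\<forall>y. deriv (deriv f) y - c * deriv f y - f y ^ 4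
               = - (LINT \<eta>|lborel. E (y - \<eta>) * f \<eta> ^ 4)"
    and "\<forall>y. lam \<le> f y \<and> f y \<le> T_M"
  shows "\<exists>C. \<forall>y. f y = C"
proof -
  note c = assms(1) and lam = assms(2)
  define T where "T = T_M"
  have T: "0 < T" using assms(2,3) by (simp add: T_def)
  define f1 where "f1 = deriv f"
  define f2 where "f2 = deriv f1"
  have df: "\<And>y. (f has_real_derivative f1 y) (at y)"
    using assms(4) DERIV_deriv_iff_real_differentiable f1_def by blast
  have df1: "\<And>y. (f1 has_real_derivative f2 y) (at y)"
    using assms(5) DERIV_deriv_iff_real_differentiable f1_def f2_def by blast
  have f2c: "continuous_on UNIV f2" using assms(6) f2_def f1_def by simp
  have f1c: "continuous_on UNIV f1" by (rule deriv_cont[OF df1])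
  have fc: "continuous_on UNIV f" by (rule deriv_cont[OF df])
  have fb: "\<And>y. lam \<le> f y \<and> f y \<le> T" using assms(8) by (simp add: T_def)
  have f0: "\<And>y. 0 \<le> f y" using fb lam by (meson less_le_trans less_imp_le not_le)
  define h where "h y = f y ^ 4" for y
  have hc: "continuous_on UNIV h" unfolding h_def[abs_def] by (intro continuous_intros fc)
  have hm[measurable]: "h \<in> borel_measurable borel" by (rule borel_measurable_continuous_onI[OF hc])
  have h0: "\<And>x. 0 \<le> h x" by (simp add: h_def f0)
  have hT: "\<And>x. h x \<le> T ^ 4" unfolding h_def using fb f0 by (intro power_mono) auto
  have hB: "\<And>x. \<bar>h x\<bar> \<le> T ^ 4" using h0 hT by simp
  define P where "P y = (LBINT s. E s * h (y - s))" for y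
  have eq: "\<And>y. f2 y - c * f1 y = h y - P y"
  proof -
    fix y
    have "f2 y - c * f1 y - h y = - (LBINT \<eta>. E (y - \<eta>) * h \<eta>)"
      using assms(7) by (simp add: f1_def f2_def h_def)
    then show "f2 y - c * f1 y = h y - P y"
      unfolding P_def conv_shift by simp
  qed
  have P0: "\<And>y. 0 \<le> P y" unfolding P_def by (rule conv_ge[OF hm hB]) (simp add: h0)
  have PT: "\<And>y. P y \<le> T ^ 4" unfolding P_def by (rule conv_le[OF hm hB]) (simp add: hT)
  define B0 where "B0 = T ^ 4"
  have B0: "0 < B0" using T by (simp add: B0_def)
  have Bd: "\<bar>f2 y - c * f1 y\<bar> \<le> B0" for y
    using h0[of y] hT[of y] P0[of y] PT[of y] unfolding eq B0_def abs_le_iff by linarith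
  have f1B: "\<And>y. \<bar>f1 y\<bar> \<le> B0 / c" by (rule ode_bound[OF df df1 c Bd fb])
  define L where "L = 2 * B0 + 1"
  have L: "0 < L" using B0 by (simp add: L_def)
  have f2B: "\<And>y. \<bar>f2 y\<bar> \<le> L"
  proof -
    fix y
    have "\<bar>c * f1 y\<bar> \<le> B0" using f1B[of y] c by (simp add: abs_mult field_simps)
    then show "\<bar>f2 y\<bar> \<le> L" using Bd[of y] unfolding L_def by linarith
  qed
  obtain Gh where Gh: "\<And>x. (Gh has_real_derivative h x) (at x)" using antideriv[OF hc] by blast
  define h2 where "h2 x = (h x)\<^sup>2" for x
  have h2c: "continuous_on UNIV h2" unfolding h2_def[abs_def] by (intro continuous_intros hc)
  have h2m[measurable]: "h2 \<in> borel_measurable borel" by (rule borel_measurable_continuous_onI[OF h2c])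
  have h2B: "\<bar>h2 x\<bar> \<le> (T ^ 4)\<^sup>2" for x
  proof -
    have "(h x)\<^sup>2 \<le> (T ^ 4)\<^sup>2" by (rule power_mono[OF hT h0])
    then show ?thesis by (simp add: h2_def)
  qed
  obtain Gh2 where Gh2: "\<And>x. (Gh2 has_real_derivative h2 x) (at x)" using antideriv[OF h2c] by blast
  define q where "q y = 4 * f y ^ 3 * (f1 y)\<^sup>2" for y
  have qc: "continuous_on UNIV q" unfolding q_def[abs_def] by (intro continuous_intros fc f1c)
  have q0: "\<And>y. 0 \<le> q y" unfolding q_def using f0 by simp
  obtain Qf where Qf: "\<And>x. (Qf has_real_derivative q x) (at x)" using antideriv[OF qc] by blast
  have Qmono: "Qf x \<le> Qf x'" if "x \<le> x'" for x x'
  proof -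
    obtain \<xi> where "Qf x' - Qf x = (x' - x) * q \<xi>" using mvt_gen[OF Qf, of x' x] by blast
    moreover have "0 \<le> (x' - x) * q \<xi>" using that q0[of \<xi>] by simp
    ultimately show ?thesis by linarith
  qed
  define m1 where "m1 = (LBINT s. \<bar>s\<bar> * E s)"
  define Sh where "Sh R = (LINT y:{-R..R}|lborel. h y) - (LINT y:{-R..R}|lborel. P y)" for R
  define Sh2 where "Sh2 R = (LINT y:{-R..R}|lborel. h2 y) - (LINT y:{-R..R}|lborel. LBINT s. E s * h2 (y - s))" for R
  have Sh_repr: "Sh R = (LBINT s. E s * ((Gh R - Gh (-R)) - (Gh (R - s) - Gh (-R - s))))" if "0 \<le> R" for R
    unfolding Sh_def P_def by (rule S_repr[OF hc hB Gh that])
  have Sh2_repr: "Sh2 R = (LBINT s. E s * ((Gh2 R - Gh2 (-R)) - (Gh2 (R - s) - Gh2 (-R - s))))" if "0 \<le> R" for R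
    unfolding Sh2_def by (rule S_repr[OF h2c h2B Gh2 that])
  have Sh2_bound: "\<bar>Sh2 R\<bar> \<le> 2 * (T ^ 4)\<^sup>2 * m1" if "0 \<le> R" for R
    unfolding Sh2_repr[OF that] m1_def by (rule S_bound[OF h2c h2B Gh2])
  have hsi: "set_integrable lborel {-R..R} h" for R
    unfolding set_integrable_def using borel_integrable_compact[of "{-R..R}" h] hc
    by (auto intro: continuous_on_subset)
  have I1: "(f1 R - c * f R) - (f1 (-R) - c * f (-R)) = Sh R" if "0 \<le> R" for R
  proof -
    have "(LINT y:{-R..R}|lborel. f2 y - c * f1 y) = (f1 R - c * f R) - (f1 (-R) - c * f (-R))"
    proof (rule ftc_Icc)
      show "-R \<le> R" using that by simp
      show "((\<lambda>y. f1 y - c * f y) has_real_derivative f2 y - c * f1 y) (at y)" for y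
        by (auto intro!: derivative_eq_intros df df1)
      show "continuous_on UNIV (\<lambda>y. f2 y - c * f1 y)" by (intro continuous_intros f2c f1c)
    qed
    moreover have "(LINT y:{-R..R}|lborel. f2 y - c * f1 y) = (LINT y:{-R..R}|lborel. h y - P y)"
      by (simp add: eq)
    moreover have "(LINT y:{-R..R}|lborel. h y - P y) = Sh R"
      unfolding Sh_def
      by (rule set_integral_diff(2)[OF hsi]) (unfold P_def, rule conv_fubini(1)[OF hm hB])
    ultimately show ?thesis by simp
  qed
  have dh: "(h has_real_derivative 4 * f x ^ 3 * f1 x) (at x)" for x
    using DERIV_power[OF df[of x], where n=4] unfolding h_def[abs_def] by (simp add: mult_ac)
  define \<Phi> where "\<Phi> y = f1 y * h y - c / 5 * f y ^ 5" for y
  have I2: "Qf R - Qf (-R) \<le> \<Phi> R - \<Phi> (-R) - Sh2 R / 2" if "0 \<le> R" for R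
  proof -
    have cont_i: "set_integrable lborel {-R..R} F" if "continuous_on UNIV F" for F :: "real \<Rightarrow> real"
      unfolding set_integrable_def using borel_integrable_compact[of "{-R..R}" F] that
      by (auto intro: continuous_on_subset)
    have A: "(LINT y:{-R..R}|lborel. (f2 y - c * f1 y) * h y + q y) = \<Phi> R - \<Phi> (-R)"
    proof (rule ftc_Icc)
      show "-R \<le> R" using that by simp
      show "(\<Phi> has_real_derivative (f2 y - c * f1 y) * h y + q y) (at y)" for y
      proof -
        have d5: "((\<lambda>z. f z ^ 5) has_real_derivative real 5 * f y ^ (5 - 1) * f1 y) (at y)"
          using DERIV_power[OF df[of y], where n=5] by (simp add: mult_ac)
        have "(\<Phi> has_real_derivative f1 y * (4 * f y ^ 3 * f1 y) + f2 y * h y - c / 5 * (real 5 * f y ^ (5 - 1) * f1 y)) (at y)"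
          unfolding \<Phi>_def[abs_def]
          by (rule DERIV_diff[OF DERIV_mult'[OF df1 dh] DERIV_cmult[OF d5]])
        moreover have "f1 y * (4 * f y ^ 3 * f1 y) + f2 y * h y - c / 5 * (real 5 * f y ^ (5 - 1) * f1 y)
            = (f2 y - c * f1 y) * h y + q y"
          by (simp add: h_def q_def power2_eq_square algebra_simps)
        ultimately show ?thesis by simp
      qed
      show "continuous_on UNIV (\<lambda>y. (f2 y - c * f1 y) * h y + q y)"
        by (intro continuous_intros f2c f1c hc qc)
    qed
    have Bq: "(LINT y:{-R..R}|lborel. q y) = Qf R - Qf (-R)"
      by (rule ftc_Icc[OF _ Qf qc]) (use that in simp)
    have C: "(LINT y:{-R..R}|lborel. (f2 y - c * f1 y) * h y + q y)
        = (LINT y:{-R..R}|lborel. (f2 y - c * f1 y) * h y) + (LINT y:{-R..R}|lborel. q y)"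
      by (rule set_integral_add(2)) (intro cont_i continuous_intros f2c f1c hc qc)+
    have P2i: "set_integrable lborel {-R..R} (\<lambda>y. LBINT s. E s * h2 (y - s))"
      by (rule conv_fubini(1)[OF h2m h2B])
    have h2i: "set_integrable lborel {-R..R} h2" by (rule cont_i[OF h2c])
    have D: "(LINT y:{-R..R}|lborel. (1/2) * (h2 y - (LBINT s. E s * h2 (y - s))))
        \<le> (LINT y:{-R..R}|lborel. (f2 y - c * f1 y) * h y)"
    proof (rule set_integral_mono)
      show "set_integrable lborel {-R..R} (\<lambda>y. (1/2) * (h2 y - (LBINT s. E s * h2 (y - s))))"
        using set_integral_diff(1)[OF h2i P2i] by (rule set_integrable_mult_right)
      show "set_integrable lborel {-R..R} (\<lambda>y. (f2 y - c * f1 y) * h y)"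
        by (intro cont_i continuous_intros f2c f1c hc)
      fix y
      have "h y * P y \<le> ((h y)\<^sup>2 + (LBINT s. E s * (h (y - s))\<^sup>2)) / 2"
        unfolding P_def by (rule conv_quad[OF hm hB])
      then show "(1/2) * (h2 y - (LBINT s. E s * h2 (y - s))) \<le> (f2 y - c * f1 y) * h y"
        unfolding eq h2_def by (simp add: algebra_simps power2_eq_square)
    qed
    have D2: "(LINT y:{-R..R}|lborel. (1/2) * (h2 y - (LBINT s. E s * h2 (y - s)))) = Sh2 R / 2"
      unfolding Sh2_def set_integral_mult_right set_integral_diff(2)[OF h2i P2i] by simp
    show ?thesis using A Bq C D D2 by linarith
  qed
  define Cq where "Cq = 2 * (B0 / c * T ^ 4 + c / 5 * T ^ 5) + (T ^ 4)\<^sup>2 * m1"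
  have \<Phi>B: "\<bar>\<Phi> y\<bar> \<le> B0 / c * T ^ 4 + c / 5 * T ^ 5" for y
  proof -
    have "\<bar>f1 y * h y\<bar> \<le> B0 / c * T ^ 4"
      unfolding abs_mult using f1B[of y] hB[of y] by (intro mult_mono) auto
    moreover have "\<bar>c / 5 * f y ^ 5\<bar> \<le> c / 5 * T ^ 5"
    proof -
      have "f y ^ 5 \<le> T ^ 5" by (rule power_mono) (use fb[of y] f0[of y] in auto)
      then have "c / 5 * f y ^ 5 \<le> c / 5 * T ^ 5" by (rule mult_left_mono) (use c in simp)
      moreover have "0 \<le> c / 5 * f y ^ 5" using c f0[of y] by simp
      ultimately show ?thesis by simp
    qed
    ultimately show ?thesis unfolding \<Phi>_def by linarith
  qed
  have Qcrude: "Qf R - Qf (-R) \<le> Cq" if "0 \<le> R" for R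
    using I2[OF that] \<Phi>B[of R] \<Phi>B[of "-R"] Sh2_bound[OF that] unfolding Cq_def by (simp add: abs_le_iff)
  have Qup: "Qf x \<le> Qf 0 + Cq" for x
  proof (cases "0 \<le> x")
    case True
    then show ?thesis using Qcrude[OF True] Qmono[of "-x" 0] by simp
  next
    case False
    then show ?thesis using Qcrude[of 0] Qmono[of x 0] by simp
  qed
  have Qlow: "Qf 0 - Cq \<le> Qf x" for x
  proof (cases "0 \<le> x")
    case True
    then show ?thesis using Qcrude[of 0] Qmono[of 0 x] by simp
  next
    case False
    then show ?thesis using Qcrude[of "-x"] Qmono[of 0 "-x"] by simp
  qed
  have window: "Qf (y + \<epsilon> / (2 * L)) - Qf (y - \<epsilon> / (2 * L)) \<ge> (\<epsilon> / L) * (4 * lam ^ 3 * (\<epsilon> / 2)\<^sup>2)"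
    if e: "0 < \<epsilon>" "\<epsilon> \<le> \<bar>f1 y\<bar>" for y \<epsilon>
  proof -
    define w where "w = \<epsilon> / (2 * L)"
    have w: "0 < w" using e L by (simp add: w_def)
    obtain z where z: "y - w < z" "z < y + w" "Qf (y + w) - Qf (y - w) = ((y + w) - (y - w)) * q z"
      using MVT2[of "y - w" "y + w" Qf q] Qf w by auto
    have "\<bar>f1 z - f1 y\<bar> \<le> L * \<bar>z - y\<bar>" by (rule lip[OF df1 f2B])
    also have "\<dots> \<le> L * w" using z L by (intro mult_left_mono) auto
    also have "\<dots> = \<epsilon> / 2" using L by (simp add: w_def)
    finally have "\<epsilon> / 2 \<le> \<bar>f1 z\<bar>" using e by linarith
    then have sq: "(\<epsilon> / 2)\<^sup>2 \<le> (f1 z)\<^sup>2"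
      using power_mono[of "\<epsilon> / 2" "\<bar>f1 z\<bar>" 2] e by simp
    have cu: "lam ^ 3 \<le> f z ^ 3" using fb[of z] lam by (intro power_mono) auto
    have "4 * lam ^ 3 * (\<epsilon> / 2)\<^sup>2 \<le> q z"
      unfolding q_def using sq cu lam f0[of z] by (intro mult_mono) auto
    then have "(2 * w) * (4 * lam ^ 3 * (\<epsilon> / 2)\<^sup>2) \<le> (2 * w) * q z"
      using w by (intro mult_left_mono) auto
    moreover have "2 * w = \<epsilon> / L" using L by (simp add: w_def)
    ultimately show ?thesis using z(3) unfolding w_def[symmetric] by simp
  qed
  have f1dec: "\<exists>N. \<forall>y. N \<le> \<bar>y\<bar> \<longrightarrow> \<bar>f1 y\<bar> \<le> \<epsilon>" if e: "0 < \<epsilon>" for \<epsilon>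
  proof -
    define \<delta> where "\<delta> = (\<epsilon> / L) * (4 * lam ^ 3 * (\<epsilon> / 2)\<^sup>2)"
    have \<delta>: "0 < \<delta>" using e L lam by (simp add: \<delta>_def)
    define w where "w = \<epsilon> / (2 * L)"
    have w: "0 < w" using e L by (simp add: w_def)
    have bdA: "bdd_above (range Qf)" by (rule bdd_aboveI2, rule Qup)
    have bdB: "bdd_below (range Qf)" by (rule bdd_belowI2, rule Qlow)
    have "Sup (range Qf) - \<delta> < Sup (range Qf)" using \<delta> by simp
    then obtain x0 where x0: "Sup (range Qf) - \<delta> < Qf x0"
      using less_cSup_iff[OF _ bdA] by auto
    have "\<exists>x\<in>range Qf. x < Inf (range Qf) + \<delta>"
      using cInf_less_iff[OF _ bdB, of "Inf (range Qf) + \<delta>"] \<delta> by simp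
    then obtain x1 where x1: "Qf x1 < Inf (range Qf) + \<delta>" by auto
    show ?thesis
    proof (intro exI[of _ "max (\<bar>x0\<bar> + w) (\<bar>x1\<bar> + w)"] allI impI)
      fix y assume y: "max (\<bar>x0\<bar> + w) (\<bar>x1\<bar> + w) \<le> \<bar>y\<bar>"
      show "\<bar>f1 y\<bar> \<le> \<epsilon>"
      proof (rule ccontr)
        assume "\<not> \<bar>f1 y\<bar> \<le> \<epsilon>"
        then have win: "\<delta> \<le> Qf (y + w) - Qf (y - w)"
          using window[of \<epsilon> y] e unfolding \<delta>_def w_def by simp
        show False
        proof (cases "0 \<le> y")
          case True
          then have "x0 \<le> y - w" using y by auto
          then have "Qf x0 \<le> Qf (y - w)" by (rule Qmono)
          moreover have "Qf (y + w) \<le> Sup (range Qf)" using bdA by (rule cSup_upper[rotated]) simp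
          ultimately show False using win x0 by linarith
        next
          case False
          then have "y + w \<le> x1" using y by auto
          then have "Qf (y + w) \<le> Qf x1" by (rule Qmono)
          moreover have "Inf (range Qf) \<le> Qf (y - w)" using bdB by (rule cInf_lower[rotated]) simp
          ultimately show False using win x1 by linarith
        qed
      qed
    qed
  qed
  have dec_from: "\<exists>N. \<forall>x. N \<le> \<bar>x\<bar> \<longrightarrow> \<bar>g' x\<bar> \<le> \<epsilon>"
    if K: "0 < K" and gK: "\<And>x. \<bar>g' x\<bar> \<le> K * \<bar>f1 x\<bar>" and e: "0 < \<epsilon>" for g' :: "real \<Rightarrow> real" and K \<epsilon>
  proof -
    obtain N where N: "\<forall>y. N \<le> \<bar>y\<bar> \<longrightarrow> \<bar>f1 y\<bar> \<le> \<epsilon> / K" using f1dec[of "\<epsilon> / K"] K e by auto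
    show ?thesis
    proof (intro exI[of _ N] allI impI)
      fix x assume "N \<le> \<bar>x\<bar>"
      then have "K * \<bar>f1 x\<bar> \<le> K * (\<epsilon> / K)" using N K by (intro mult_left_mono) auto
      then show "\<bar>g' x\<bar> \<le> \<epsilon>" using gK[of x] K by simp
    qed
  qed
  have dh2: "(h2 has_real_derivative 2 * h x * (4 * f x ^ 3 * f1 x)) (at x)" for x
    using DERIV_power[OF dh[of x], where n=2] unfolding h2_def[abs_def] by (simp add: mult_ac)
  have T3: "\<And>x. \<bar>f x ^ 3\<bar> \<le> T ^ 3" using f0 fb by (simp add: power_mono)
  have Sh_lim: "(Sh \<longlongrightarrow> 0) at_top"
  proof -
    have "((\<lambda>R. LBINT s. E s * ((Gh R - Gh (-R)) - (Gh (R - s) - Gh (-R - s)))) \<longlongrightarrow> 0) at_top"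
    proof (rule S_limit[OF hc hB Gh dh])
      fix \<epsilon> :: real assume "0 < \<epsilon>"
      show "\<exists>N. \<forall>x. N \<le> \<bar>x\<bar> \<longrightarrow> \<bar>4 * f x ^ 3 * f1 x\<bar> \<le> \<epsilon>"
      proof (rule dec_from[of "4 * T ^ 3"])
        show "0 < 4 * T ^ 3" using T by simp
        show "\<bar>4 * f x ^ 3 * f1 x\<bar> \<le> 4 * T ^ 3 * \<bar>f1 x\<bar>" for x
          unfolding abs_mult using T3[of x] by (intro mult_right_mono) auto
      qed fact
    qed
    moreover have "\<forall>\<^sub>F R in at_top. (LBINT s. E s * ((Gh R - Gh (-R)) - (Gh (R - s) - Gh (-R - s)))) = Sh R"
      using eventually_ge_at_top[of "0::real"] by eventually_elim (simp add: Sh_repr)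
    ultimately show ?thesis by (rule Lim_transform_eventually)
  qed
  have Sh2_lim: "(Sh2 \<longlongrightarrow> 0) at_top"
  proof -
    have "((\<lambda>R. LBINT s. E s * ((Gh2 R - Gh2 (-R)) - (Gh2 (R - s) - Gh2 (-R - s)))) \<longlongrightarrow> 0) at_top"
    proof (rule S_limit[OF h2c h2B Gh2 dh2])
      fix \<epsilon> :: real assume "0 < \<epsilon>"
      show "\<exists>N. \<forall>x. N \<le> \<bar>x\<bar> \<longrightarrow> \<bar>2 * h x * (4 * f x ^ 3 * f1 x)\<bar> \<le> \<epsilon>"
      proof (rule dec_from[of "2 * T ^ 4 * (4 * T ^ 3)"])
        show "0 < 2 * T ^ 4 * (4 * T ^ 3)" using T by simp
        show "\<bar>2 * h x * (4 * f x ^ 3 * f1 x)\<bar> \<le> 2 * T ^ 4 * (4 * T ^ 3) * \<bar>f1 x\<bar>" for x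
        proof -
          have i: "\<bar>f x ^ 3\<bar> * \<bar>f1 x\<bar> \<le> T ^ 3 * \<bar>f1 x\<bar>" by (rule mult_right_mono[OF T3]) simp
          have "\<bar>h x\<bar> * (\<bar>f x ^ 3\<bar> * \<bar>f1 x\<bar>) \<le> T ^ 4 * (T ^ 3 * \<bar>f1 x\<bar>)"
            by (rule mult_mono[OF hB i]) (use T in auto)
          then show ?thesis unfolding abs_mult by (simp add: mult_ac)
        qed
      qed fact
    qed
    moreover have "\<forall>\<^sub>F R in at_top. (LBINT s. E s * ((Gh2 R - Gh2 (-R)) - (Gh2 (R - s) - Gh2 (-R - s)))) = Sh2 R"
      using eventually_ge_at_top[of "0::real"] by eventually_elim (simp add: Sh2_repr)
    ultimately show ?thesis by (rule Lim_transform_eventually)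
  qed
  have f1p: "(f1 \<longlongrightarrow> 0) at_top" and f1m: "((\<lambda>R. f1 (-R)) \<longlongrightarrow> 0) at_top"
    using decay_tendsto[of f1, OF f1dec] by auto
  have fdiff: "((\<lambda>R. f R - f (-R)) \<longlongrightarrow> 0) at_top"
  proof -
    have "((\<lambda>R. (f1 R - f1 (-R) - Sh R) / c) \<longlongrightarrow> (0 - 0 - 0) / c) at_top"
      using c by (intro tendsto_divide tendsto_diff f1p f1m Sh_lim tendsto_const) simp
    then have lim0: "((\<lambda>R. (f1 R - f1 (-R) - Sh R) / c) \<longlongrightarrow> 0) at_top" by simp
    have "\<forall>\<^sub>F R in at_top. (f1 R - f1 (-R) - Sh R) / c = f R - f (-R)"
      using eventually_ge_at_top[of "0::real"]
    proof eventually_elim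
      case (elim R)
      show ?case using I1[OF elim] c by (simp add: field_simps)
    qed
    then show ?thesis by (rule Lim_transform_eventually[OF lim0])
  qed
  have \<Phi>lim: "((\<lambda>R. \<Phi> R - \<Phi> (-R)) \<longlongrightarrow> 0) at_top"
  proof (rule Lim_null_comparison)
    show "\<forall>\<^sub>F R in at_top. norm (\<Phi> R - \<Phi> (-R)) \<le> T ^ 4 * \<bar>f1 R\<bar> + T ^ 4 * \<bar>f1 (-R)\<bar> + c / 5 * (5 * T ^ 4 * \<bar>f R - f (-R)\<bar>)"
    proof (intro always_eventually allI)
      fix R
      have a1: "\<bar>f1 R * h R\<bar> \<le> T ^ 4 * \<bar>f1 R\<bar>"
        unfolding abs_mult using mult_right_mono[OF hB[of R] abs_ge_zero[of "f1 R"]] by (simp add: mult.commute)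
      have a2: "\<bar>f1 (-R) * h (-R)\<bar> \<le> T ^ 4 * \<bar>f1 (-R)\<bar>"
        unfolding abs_mult using mult_right_mono[OF hB[of "-R"] abs_ge_zero[of "f1 (-R)"]] by (simp add: mult.commute)
      have p5: "\<bar>f R ^ 5 - f (-R) ^ 5\<bar> \<le> 5 * T ^ 4 * \<bar>f R - f (-R)\<bar>"
        by (rule pow5_bound) (use f0 fb in auto)
      have a3: "\<bar>c / 5 * (f R ^ 5 - f (-R) ^ 5)\<bar> \<le> c / 5 * (5 * T ^ 4 * \<bar>f R - f (-R)\<bar>)"
        unfolding abs_mult using mult_left_mono[OF p5, of "c / 5"] c by simp
      have eqP: "\<Phi> R - \<Phi> (-R) = f1 R * h R - f1 (-R) * h (-R) - c / 5 * (f R ^ 5 - f (-R) ^ 5)"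
        unfolding \<Phi>_def by (simp add: algebra_simps)
      have t1: "\<bar>f1 R * h R - f1 (-R) * h (-R) - c / 5 * (f R ^ 5 - f (-R) ^ 5)\<bar>
          \<le> \<bar>f1 R * h R - f1 (-R) * h (-R)\<bar> + \<bar>c / 5 * (f R ^ 5 - f (-R) ^ 5)\<bar>"
        by (rule abs_triangle_ineq4)
      have t2: "\<bar>f1 R * h R - f1 (-R) * h (-R)\<bar> \<le> \<bar>f1 R * h R\<bar> + \<bar>f1 (-R) * h (-R)\<bar>"
        by (rule abs_triangle_ineq4)
      show "norm (\<Phi> R - \<Phi> (-R)) \<le> T ^ 4 * \<bar>f1 R\<bar> + T ^ 4 * \<bar>f1 (-R)\<bar> + c / 5 * (5 * T ^ 4 * \<bar>f R - f (-R)\<bar>)"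
        unfolding real_norm_def eqP using t1 t2 a1 a2 a3 by linarith
    qed
    have "((\<lambda>R. T ^ 4 * \<bar>f1 R\<bar> + T ^ 4 * \<bar>f1 (-R)\<bar> + c / 5 * (5 * T ^ 4 * \<bar>f R - f (-R)\<bar>)) \<longlongrightarrow>
        T ^ 4 * \<bar>0\<bar> + T ^ 4 * \<bar>0\<bar> + c / 5 * (5 * T ^ 4 * \<bar>0\<bar>)) at_top"
      by (intro tendsto_intros f1p f1m fdiff)
    then show "((\<lambda>R. T ^ 4 * \<bar>f1 R\<bar> + T ^ 4 * \<bar>f1 (-R)\<bar> + c / 5 * (5 * T ^ 4 * \<bar>f R - f (-R)\<bar>)) \<longlongrightarrow> 0) at_top"
      by simp
  qed
  have RHS: "((\<lambda>R. \<Phi> R - \<Phi> (-R) - Sh2 R / 2) \<longlongrightarrow> 0 - 0 / 2) at_top"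
    by (intro tendsto_diff tendsto_divide \<Phi>lim Sh2_lim tendsto_const) simp
  have f1z: "f1 y0 = 0" for y0
  proof (rule ccontr)
    assume ne: "f1 y0 \<noteq> 0"
    define \<epsilon> where "\<epsilon> = \<bar>f1 y0\<bar>"
    have e: "0 < \<epsilon>" using ne by (simp add: \<epsilon>_def)
    define w where "w = \<epsilon> / (2 * L)"
    define \<delta> where "\<delta> = (\<epsilon> / L) * (4 * lam ^ 3 * (\<epsilon> / 2)\<^sup>2)"
    have \<delta>: "0 < \<delta>" using e L lam by (simp add: \<delta>_def)
    have win: "\<delta> \<le> Qf (y0 + w) - Qf (y0 - w)"
      using window[of \<epsilon> y0] e unfolding \<delta>_def w_def \<epsilon>_def by simp
    have "\<forall>\<^sub>F R in at_top. \<Phi> R - \<Phi> (-R) - Sh2 R / 2 < \<delta>"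
      using order_tendstoD(2)[OF RHS, of \<delta>] \<delta> by simp
    moreover have "\<forall>\<^sub>F R in at_top. \<bar>y0\<bar> + w \<le> R" by (rule eventually_ge_at_top)
    ultimately have "\<forall>\<^sub>F R in at_top. \<Phi> R - \<Phi> (-R) - Sh2 R / 2 < \<delta> \<and> \<bar>y0\<bar> + w \<le> R"
      by eventually_elim auto
    then obtain N where N: "\<forall>R\<ge>N. \<Phi> R - \<Phi> (-R) - Sh2 R / 2 < \<delta> \<and> \<bar>y0\<bar> + w \<le> R"
      unfolding eventually_at_top_linorder by blast
    then have R: "\<Phi> N - \<Phi> (-N) - Sh2 N / 2 < \<delta>" "\<bar>y0\<bar> + w \<le> N" by auto
    have w0: "0 < w" using e L by (simp add: w_def)
    have R0: "0 \<le> N" using R(2) w0 by linarith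
    have "Qf (y0 + w) \<le> Qf N" using R(2) by (intro Qmono) linarith
    moreover have "Qf (-N) \<le> Qf (y0 - w)" using R(2) by (intro Qmono) linarith
    ultimately show False using I2[OF R0] R(1) win by linarith
  qed
  have "\<forall>y. (f has_real_derivative 0) (at y)" using df f1z by simp
  then have "\<And>y. f y = f 0" by (intro DERIV_isconst_all)
  then show ?thesis by blast
qed

end
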